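(* For integers $k\ge1$ and $1\le j\le 2k-1$ put \[ a_{jk}=\sum_{i=\max(k-j,0)}^{k-1}\Big(-\frac12\Big)^i(j)_{k-i}\frac{(k-1+i)!}{(k-1-i)!\,i!}, \] with $(n)_r=n(n-1)\cdots(n-r+1)$, $(n)_0=1$. Then $a_{2k-1,k}=\dfrac{(2k-1)!}{2^{k-1}(k-1)!}\neq0$, and $a_{jk}=0$ for every even $j$ with $2\le j\le 2k-2$. *)

theory Defs
  imports Complex_Main
begin

definition falling :: "int \<Rightarrow> nat \<Rightarrow> real" where
  "falling n r = (\<Prod>l<r. real_of_int (n - int l))"

definition a_coef :: "nat \<Rightarrow> nat \<Rightarrow> real" where
  "a_coef j k = (\<Sum>i = nat (max (int k - int j) 0) .. k - 1.
      (- 1 / 2) ^ i * falling (int j) (k - i)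
      * fact (k - 1 + i) / (fact (k - 1 - i) * fact i))"

end

theory Submission
  imports Defs
begin

definition cc :: "nat \<Rightarrow> nat \<Rightarrow> real" where
  "cc k i = (if i < k then (- 1 / 2) ^ i * fact (k - 1 + i) / (fact (k - 1 - i) * fact i) else 0)"

definition B :: "nat \<Rightarrow> nat \<Rightarrow> real" where
  "B k j = (\<Sum>i<k. cc k i * falling (int j) (k - i))"

lemma field_aux:
  fixes X Q P a b :: real
  assumes "Q > 0" "P > 0" "a \<ge> 0" "b \<ge> 0"
  shows "(2*a+b+3) * (2*a+b+2) * X / (((b+1) * Q) * ((a+1) * P)) =
   (2*a+b+2) * X / (Q * ((a+1) * P)) + 2 * (2*a+b+2) * X / (((b+1) * Q) * P)"
proof -
  have h: "(b+1) * Q > 0" "(a+1)*P > 0" using assms by auto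
  define D where "D = ((b+1) * Q) * ((a+1) * P)"
  have D: "D > 0" using h unfolding D_def by simp
  have r1: "(2*a+b+2) * X / (Q * ((a+1) * P)) = (2*a+b+2) * X * (b+1) / D"
  proof -
    have "(2*a+b+2) * X * (b+1) / D = ((2*a+b+2) * X) * (b+1) / ((Q * ((a+1) * P)) * (b+1))"
      unfolding D_def by (simp only: mult_ac)
    also have "\<dots> = (2*a+b+2) * X / (Q * ((a+1) * P))"
      by (rule nonzero_mult_divide_mult_cancel_right) (use assms in simp)
    finally show ?thesis by simp
  qed
  have r2: "2 * (2*a+b+2) * X / (((b+1) * Q) * P) = 2 * (2*a+b+2) * X * (a+1) / D"
  proof -
    have "2 * (2*a+b+2) * X * (a+1) / D = (2 * (2*a+b+2) * X) * (a+1) / ((((b+1) * Q) * P) * (a+1))"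
      unfolding D_def by (simp only: mult_ac)
    also have "\<dots> = 2 * (2*a+b+2) * X / (((b+1) * Q) * P)"
      by (rule nonzero_mult_divide_mult_cancel_right) (use assms in simp)
    finally show ?thesis by simp
  qed
  have r0: "(2*a+b+3) * (2*a+b+2) * X / (((b+1) * Q) * ((a+1) * P)) = (2*a+b+3) * (2*a+b+2) * X / D"
    unfolding D_def by simp
  show ?thesis unfolding r0 r1 r2 add_divide_distrib[symmetric]
    by (rule arg_cong[where f="\<lambda>t. t / D"]) (simp add: algebra_simps)
qed

lemma fact_id:
  "(fact (2*p+q+3) :: real) / (fact (q+1) * fact (p+1)) =
   fact (2*p+q+2) / (fact q * fact (p+1)) + 2 * (2 * real p + real q + 2) * fact (2*p+q+1) / (fact (q+1) * fact p)"
proof -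
  have e1: "(fact (2*p+q+3) :: real) = (2*real p+real q+3) * (2*real p+real q+2) * fact (2*p+q+1)"
    by (simp add: fact_Suc numeral_3_eq_3 eval_nat_numeral algebra_simps)
  have e2: "(fact (2*p+q+2) :: real) = (2*real p+real q+2) * fact (2*p+q+1)"
    by (simp add: fact_Suc eval_nat_numeral algebra_simps)
  have e3: "(fact (q+1) :: real) = (real q+1) * fact q" by (simp add: fact_Suc algebra_simps)
  have e4: "(fact (p+1) :: real) = (real p+1) * fact p" by (simp add: fact_Suc algebra_simps)
  show ?thesis unfolding e1 e2 e3 e4
    using field_aux[of "fact q" "fact p" "real p" "real q" "fact (2*p+q+1)"] by simp
qed

lemma cc_rec:
  assumes "k \<ge> 1" "i \<le> k"
  shows "cc (Suc k) i = cc k i - (real k + real i - 1) * (if i = 0 then 0 else cc k (i - 1))"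
proof -
  obtain m where m: "k = Suc m" using assms by (cases k) auto
  show ?thesis
  proof (cases i)
    case 0 then show ?thesis by (simp add: cc_def m)
  next
    case (Suc p)
    show ?thesis
    proof (cases "p < m")
      case True
      then obtain q where q: "m = p + 1 + q" using less_imp_Suc_add[OF True] by auto
      have kq: "k = Suc (p + 1 + q)" and iq: "i = Suc p" using m q Suc by auto
      have c0: "cc (Suc k) i = (- 1 / 2) ^ (p+1) * (fact (2*p+q+3) / (fact (q+1) * fact (p+1)))"
        unfolding cc_def kq iq by (simp add: algebra_simps eval_nat_numeral del: fact_Suc)
      have c1: "cc k i = (- 1 / 2) ^ (p+1) * (fact (2*p+q+2) / (fact q * fact (p+1)))"
        unfolding cc_def kq iq by (simp add: algebra_simps eval_nat_numeral del: fact_Suc)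
      have c2: "cc k (i - 1) = (- 1 / 2) ^ p * (fact (2*p+q+1) / (fact (q+1) * fact p))"
        unfolding cc_def kq iq by (simp add: algebra_simps eval_nat_numeral del: fact_Suc)
      have c3: "real k + real i - 1 = 2 * real p + real q + 2" unfolding kq iq by simp
      have "cc (Suc k) i = (- 1 / 2) ^ (p+1) * (fact (2*p+q+2) / (fact q * fact (p+1)))
          + (- 1 / 2) ^ (p+1) * (2 * (2 * real p + real q + 2) * fact (2*p+q+1) / (fact (q+1) * fact p))"
        unfolding c0 fact_id distrib_left ..
      also have "\<dots> = cc k i - (real k + real i - 1) * cc k (i - 1)"
        unfolding c1 c2 c3 by (simp add: field_simps del: fact_Suc)
      finally show ?thesis using Suc by simp
    next
      case False
      then have pm: "p = m" using assms m Suc by simp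
      have kq: "k = Suc m" and iq: "i = Suc m" using m Suc pm by auto
      have e1: "(fact (2*m+2) :: real) = (2 * real m + 2) * ((2 * real m + 1) * fact (2*m))"
        by (simp add: fact_Suc eval_nat_numeral algebra_simps)
      have e2: "(fact (2*m+1) :: real) = (2 * real m + 1) * fact (2*m)"
        by (simp add: fact_Suc eval_nat_numeral algebra_simps)
      have e4: "(fact (m+1) :: real) = (real m + 1) * fact m" by (simp add: fact_Suc algebra_simps)
      have c0: "cc (Suc k) i = (- 1 / 2) ^ (m+1) * (fact (2*m+2) / fact (m+1))"
        unfolding cc_def kq iq by (simp add: algebra_simps eval_nat_numeral del: fact_Suc)
      have c2: "cc k (i - 1) = (- 1 / 2) ^ m * (fact (2*m) / fact m)"
        unfolding cc_def kq iq by (simp add: algebra_simps eval_nat_numeral del: fact_Suc)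
      have c3: "real k + real i - 1 = 2 * real m + 1" unfolding kq iq by simp
      have gen: "- (1/2) * s * ((2*a+2) * ((2*a+1) * X) / ((a+1) * Y)) = - (2*a+1) * (s * (X / Y))"
        if "a \<ge> 0" "Y \<noteq> 0" for a s X Y :: real
      proof -
        have h: "a + 1 \<noteq> 0" using that by simp
        have "(2*a+2) * ((2*a+1) * X) / ((a+1) * Y) = (a+1) * (2*(2*a+1)*X) / ((a+1) * Y)"
          by (simp add: algebra_simps)
        also have "\<dots> = 2*(2*a+1)*X / Y" by (rule nonzero_mult_divide_mult_cancel_left[OF h])
        finally have eq: "(2*a+2) * ((2*a+1) * X) / ((a+1) * Y) = 2*(2*a+1)*X / Y" .
        show ?thesis unfolding eq using that(2) by (simp add: field_simps)
      qed
      have fin: "cc (Suc k) i = - (real k + real i - 1) * cc k (i - 1)"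
        unfolding c0 c2 c3 e1 e4 power_Suc[of "- 1 / 2" m, unfolded Suc_eq_plus1]
        using gen[of "real m" "fact m" "(- 1 / 2) ^ m" "fact (2*m)"] by (simp add: mult.assoc del: fact_Suc)
      have z: "cc k i = 0" by (simp add: cc_def kq iq)
      show ?thesis unfolding fin z using Suc by (simp add: algebra_simps)
    qed
  qed
qed

lemma falling_Suc: "falling n (Suc r) = falling n r * (real_of_int n - real r)"
  by (simp add: falling_def)

lemma B_Suc:
  assumes "k \<ge> 1"
  shows "B (Suc k) j = (real j - 2 * real k) * B k j"
proof -
  let ?F = "\<lambda>r. falling (int j) r"
  let ?d = "\<lambda>i. if i = 0 then 0 else cc k (i - 1)"
  have "B (Suc k) j = (\<Sum>i<Suc k. (cc k i - (real k + real i - 1) * ?d i) * ?F (Suc k - i))"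
    unfolding B_def by (rule sum.cong) (auto simp: cc_rec[OF assms])
  also have "\<dots> = (\<Sum>i<Suc k. cc k i * ?F (Suc k - i)) - (\<Sum>i<Suc k. (real k + real i - 1) * ?d i * ?F (Suc k - i))"
    by (simp only: sum_subtractf[symmetric] left_diff_distrib)
  also have "(\<Sum>i<Suc k. cc k i * ?F (Suc k - i)) = (\<Sum>i<k. cc k i * ?F (k - i) * (real j - (real k - real i)))"
  proof -
    have "(\<Sum>i<Suc k. cc k i * ?F (Suc k - i)) = (\<Sum>i<k. cc k i * ?F (Suc k - i))"
      by (simp add: cc_def)
    also have "\<dots> = (\<Sum>i<k. cc k i * ?F (k - i) * (real j - (real k - real i)))"
    proof (rule sum.cong)
      fix i assume "i \<in> {..<k}"
      then have "Suc k - i = Suc (k - i)" "real (k - i) = real k - real i" by auto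
      then show "cc k i * ?F (Suc k - i) = cc k i * ?F (k - i) * (real j - (real k - real i))"
        by (simp add: falling_Suc)
    qed simp
    finally show ?thesis .
  qed
  also have "(\<Sum>i<Suc k. (real k + real i - 1) * ?d i * ?F (Suc k - i)) = (\<Sum>i<k. (real k + real i) * cc k i * ?F (k - i))"
    by (subst sum.lessThan_Suc_shift) simp
  also have "(\<Sum>i<k. cc k i * ?F (k - i) * (real j - (real k - real i))) - (\<Sum>i<k. (real k + real i) * cc k i * ?F (k - i))
      = (\<Sum>i<k. (real j - 2 * real k) * (cc k i * ?F (k - i)))"
    by (simp add: sum_subtractf[symmetric] algebra_simps)
  also have "\<dots> = (real j - 2 * real k) * B k j"
    unfolding B_def by (simp add: sum_distrib_left)
  finally show ?thesis .
qed

lemma B_closed: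
  assumes "k \<ge> 1"
  shows "B k j = (\<Prod>l<k. real j - 2 * real l)"
  using assms
proof (induction k rule: dec_induct)
  case base
  show ?case by (simp add: B_def cc_def falling_def)
next
  case (step k)
  then show ?case by (simp add: B_Suc mult.commute)
qed

lemma a_coef_B:
  assumes "k \<ge> 1"
  shows "a_coef j k = B k j"
proof -
  let ?s = "nat (max (int k - int j) 0)"
  have sub: "{?s..k - 1} \<subseteq> {..<k}" using assms by auto
  have z: "cc k i * falling (int j) (k - i) = 0" if "i \<in> {..<k} - {?s..k - 1}" for i
  proof -
    from that have "i < k - j" by auto
    then have "j < k - i" by auto
    then have "falling (int j) (k - i) = 0"
      unfolding falling_def by (intro prod_zero) (auto intro!: bexI[where x=j])
    then show "cc k i * falling (int j) (k - i) = 0" by simp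
  qed
  have "B k j = (\<Sum>i\<in>{?s..k - 1}. cc k i * falling (int j) (k - i))"
    unfolding B_def by (rule sum.mono_neutral_right) (use sub z in auto)
  also have "\<dots> = a_coef j k"
    unfolding a_coef_def
    by (rule sum.cong) (use assms in \<open>auto simp: cc_def\<close>)
  finally show ?thesis by simp
qed

lemma odd_prod:
  "(\<Prod>l<Suc m. real (2 * Suc m - 1) - 2 * real l) = fact (2*m+1) / (2 ^ m * fact m)"
proof -
  have "(\<Prod>l<Suc m. real (2 * Suc m - 1) - 2 * real l) = (\<Prod>l<Suc m. 2 * real (Suc m - Suc l) + 1)"
    by (rule prod.cong) auto
  also have "\<dots> = (\<Prod>l<Suc m. 2 * real l + 1)"
    by (rule prod.nat_diff_reindex)
  also have "\<dots> = fact (2*m+1) / (2 ^ m * fact m)"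
  proof (induction m)
    case 0 then show ?case by simp
  next
    case (Suc m)
    have "(\<Prod>l<Suc (Suc m). 2 * real l + 1) = (2 * real (Suc m) + 1) * (fact (2*m+1) / (2 ^ m * fact m))"
      using Suc by simp
    also have "\<dots> = fact (2 * Suc m + 1) / (2 ^ Suc m * fact (Suc m))"
    proof -
      have e1: "(fact (2 * Suc m + 1) :: real) = (2 * real m + 3) * (2 * real m + 2) * fact (2*m+1)"
        by (simp add: fact_Suc eval_nat_numeral algebra_simps)
      have e2: "(2 ^ Suc m * fact (Suc m) :: real) = (2 * real m + 2) * (2 ^ m * fact m)"
        by (simp add: fact_Suc algebra_simps)
      have p: "(2 * real m + 2) \<noteq> 0" by simp
      show ?thesis unfolding e1 e2
        using nonzero_mult_divide_mult_cancel_left[OF p, of "(2 * real m + 3) * fact (2*m+1)" "2 ^ m * fact m"]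
        by (simp add: mult_ac)
    qed
    finally show ?case .
  qed
  finally show ?thesis .
qed

theorem mainTheorem11:
  fixes k :: nat
  assumes "k \<ge> 1"
  shows "a_coef (2 * k - 1) k = fact (2 * k - 1) / (2 ^ (k - 1) * fact (k - 1))
         \<and> a_coef (2 * k - 1) k \<noteq> 0
         \<and> (\<forall>j. even j \<and> 2 \<le> j \<and> j \<le> 2 * k - 2 \<longrightarrow> a_coef j k = 0)"
proof -
  obtain m where m: "k = Suc m" using assms by (cases k) auto
  have 1: "a_coef (2 * k - 1) k = fact (2 * k - 1) / (2 ^ (k - 1) * fact (k - 1))"
    using a_coef_B[OF assms] B_closed[OF assms] odd_prod[of m] by (simp add: m)
  have 2: "a_coef (2 * k - 1) k \<noteq> 0" unfolding 1 by simp
  have 3: "a_coef j k = 0" if "even j" "2 \<le> j" "j \<le> 2 * k - 2" for j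
  proof -
    obtain t where t: "j = 2 * t" using \<open>even j\<close> by auto
    have "t < k" using that t m by auto
    then have "(\<Prod>l<k. real j - 2 * real l) = 0"
      by (intro prod_zero) (auto simp: t intro!: bexI[where x=t])
    then show ?thesis using a_coef_B[OF assms] B_closed[OF assms] by simp
  qed
  show ?thesis using 1 2 3 by blast
qed

end
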